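(* There is a one-to-one correspondence between strict $2$-term Nijenhuis $\mathcal L_\infty$-conformal algebras and crossed modules of Nijenhuis Lie conformal algebras.
   Context: All spaces are over $\mathbb C$. A Lie conformal algebra is a $\mathbb C[\partial]$-module with a $\mathbb C$-bilinear $\lambda$-bracket satisfying $[\partial a_\lambda b]=-\lambda[a_\lambda b]$, $[a_\lambda\partial b]=(\partial+\lambda)[a_\lambda b]$, $[a_\lambda b]=-[b_{-\partial-\lambda}a]$, $[a_\lambda[b_\mu c]]=[[a_\lambda b]_{\lambda+\mu}c]+[b_\mu[a_\lambda c]]$. A Nijenhuis operator is a $\mathbb C[\partial]$-linear $\mathcal N$ with $[\mathcal N(p)_\lambda\mathcal N(q)]=\mathcal N([\mathcal N(p)_\lambda q]+[p_\lambda\mathcal N(q)]-\mathcal N([p_\lambda q]))$; a Nijenhuis Lie conformal algebra is a Lie conformal algebra with a Nijenhuis operator; morphisms are bracket-preserving $\mathbb C[\partial]$-linear maps intertwining the operators. A conformal representation $\rho:\mathcal L\otimes\mathcal M\to\mathcal M[\lambda]$ satisfies $\rho(\partial p)_\lambda=-\lambda\rho(p)_\lambda$, $\rho(p)_\lambda\partial m=(\partial+\lambda)\rho(p)_\lambda m$, $\rho(p)_\lambda\rho(q)_\mu m-\rho(q)_\mu\rho(p)_\lambda m=\rho([p_\lambda q])_{\lambda+\mu}m$; a representation of a Nijenhuis Lie conformal algebra $(\mathcal L,[\cdot_\lambda\cdot],\mathcal N)$ is $(\mathcal M,\rho,\mathcal N_{\mathcal M})$ with $\mathcal N_{\mathcal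 M}$ $\mathbb C[\partial]$-linear and $\rho(\mathcal N(p))_\lambda\mathcal N_{\mathcal M}(m)=\mathcal N_{\mathcal M}(\rho(\mathcal N(p))_\lambda m+\rho(p)_\lambda\mathcal N_{\mathcal M}(m)-\mathcal N_{\mathcal M}(\rho(p)_\lambda m))$. A crossed module of Nijenhuis Lie conformal algebras is a quadruple $(\mathcal L_{0\,\mathcal N_0},\mathcal L_{1\,\mathcal N_1},t,\rho)$: two Nijenhuis Lie conformal algebras, a morphism $t:\mathcal L_{1\,\mathcal N_1}\to\mathcal L_{0\,\mathcal N_0}$, and a conformal sesquilinear $\rho:\mathcal L_0\otimes\mathcal L_1\to\mathcal L_1[\lambda]$ making $(\mathcal L_1,\rho,\mathcal N_1)$ a representation of $\mathcal L_{0\,\mathcal N_0}$, with $t(\rho(p)_\lambda m)=[p_\lambda t(m)]_{\mathcal L_0}$ and $\rho(t(m))_\lambda n=[m_\lambda n]_{\mathcal L_1}$. A strict $2$-term Nijenhuis $\mathcal L_\infty$-conformal algebra consists of a $\mathbb C[\partial]$-linear map $d:\mathcal L_1\to\mathcal L_0$ of $\mathbb C[\partial]$-modules, conformal sesquilinear $\mathbb C$-bilinear brackets $\llbracket\cdot_\lambda\cdot\rrbracket$: $\mathcal L_0\otimes\mathcal L_0\to\mathcal L_0[\lambda]$, $\mathcal L_0\otimes\mathcal L_1\to\mathcal L_1[\lambda]$, $\mathcal L_1\otimes\mathcal L_0\to\mathcal L_1[\lambda]$ (with $\llbracket m_\lambda n\rrbracket=0$ for $m,n\in\mathcal L_1$),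 and $\mathbb C[\partial]$-linear maps $\mathcal N_0:\mathcal L_0\to\mathcal L_0$, $\mathcal N_1:\mathcal L_1\to\mathcal L_1$, such that for all $p,q,r\in\mathcal L_0$, $m,n\in\mathcal L_1$: $\llbracket p_\lambda m\rrbracket=-\llbracket m_{-\partial-\lambda}p\rrbracket$; $\llbracket p_\lambda q\rrbracket=-\llbracket q_{-\partial-\lambda}p\rrbracket$; $d\llbracket p_\lambda m\rrbracket=\llbracket p_\lambda d(m)\rrbracket$; $\llbracket d(m)_\lambda n\rrbracket=\llbracket m_\lambda d(n)\rrbracket$; $\llbracket p_\lambda\llbracket q_\mu r\rrbracket\rrbracket-\llbracket\llbracket p_\lambda q\rrbracket_{\lambda+\mu}r\rrbracket-\llbracket q_\mu\llbracket p_\lambda r\rrbracket\rrbracket=0$; $\llbracket p_\lambda\llbracket q_\mu m\rrbracket\rrbracket-\llbracket\llbracket p_\lambda q\rrbracket_{\lambda+\mu}m\rrbracket-\llbracket q_\mu\llbracket p_\lambda m\rrbracket\rrbracket=0$; $d\circ\mathcal N_1=\mathcal N_0\circ d$; $\mathcal N_0(\llbracket\mathcal N_0(p)_\lambda q\rrbracket+\llbracket p_\lambda\mathcal N_0(q)\rrbracket-\mathcal N_0\llbracket p_\lambda q\rrbracket)=\llbracket\mathcal N_0(p)_\lambda\mathcal N_0(q)\rrbracket$; $\mathcal N_1(\llbracket\mathcal N_0(p)_\lambda m\rrbracket+\llbracket p_\lambda\mathcal N_1(m)\rrbracket-\mathcal N_1\llbracket p_\lambda m\rrbracket)=\llbracket\mathcal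 N_0(p)_\lambda\mathcal N_1(m)\rrbracket$. (It is the special case $l_3=0$, $\mathcal N_2=0$ of a $2$-term $\mathcal L_\infty$-conformal algebra with homotopy Nijenhuis operator.) *)

theory Defs
  imports "HOL-Computational_Algebra.Polynomial"
begin

text \<open>
A \<open>\<complex>[\<partial>]\<close>-module is a type carrying a complex vector space structure
(scalar multiplication \<open>sc\<close>) together with a \<open>\<complex>\<close>-linear endomorphism \<open>D\<close> (= \<open>\<partial>\<close>).
An element of \<open>M[\<lambda>]\<close> is a polynomial \<open>'m poly\<close> with coefficients in \<open>M\<close>
(coefficient \<open>i\<close> = coefficient of \<open>\<lambda>^i\<close>); \<open>\<partial>\<close> acts coefficientwise, multiplication by
\<open>\<lambda>\<close> is \<open>pCons 0\<close>.  Elements of \<open>M[\<lambda>,\<mu>]\<close> are \<open>'m poly poly\<close>: the outer variable is \<open>\<mu>\<close>,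
the inner variable (of the coefficients) is \<open>\<lambda>\<close>.
\<close>

definition cmodule :: "(complex \<Rightarrow> 'a::ab_group_add \<Rightarrow> 'a) \<Rightarrow> ('a \<Rightarrow> 'a) \<Rightarrow> bool" where
  "cmodule sc D \<longleftrightarrow> vector_space sc \<and> Vector_Spaces.linear sc sc D"

definition cd_linear ::
  "(complex \<Rightarrow> 'a::ab_group_add \<Rightarrow> 'a) \<Rightarrow> (complex \<Rightarrow> 'b::ab_group_add \<Rightarrow> 'b)
   \<Rightarrow> ('a \<Rightarrow> 'a) \<Rightarrow> ('b \<Rightarrow> 'b) \<Rightarrow> ('a \<Rightarrow> 'b) \<Rightarrow> bool" where
  "cd_linear sca scb Da Db f \<longleftrightarrow> Vector_Spaces.linear sca scb f \<and> (\<forall>x. f (Da x) = Db (f x))"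

definition bilin ::
  "(complex \<Rightarrow> 'x::ab_group_add \<Rightarrow> 'x) \<Rightarrow> (complex \<Rightarrow> 'y::ab_group_add \<Rightarrow> 'y)
   \<Rightarrow> (complex \<Rightarrow> 'z::ab_group_add \<Rightarrow> 'z) \<Rightarrow> ('x \<Rightarrow> 'y \<Rightarrow> 'z poly) \<Rightarrow> bool" where
  "bilin scx scy scz br \<longleftrightarrow>
     (\<forall>a a' b. br (a + a') b = br a b + br a' b) \<and>
     (\<forall>a b b'. br a (b + b') = br a b + br a b') \<and>
     (\<forall>c a b. br (scx c a) b = map_poly (scz c) (br a b)) \<and>
     (\<forall>c a b. br a (scy c b) = map_poly (scz c) (br a b))"

definition sesq ::
  "('x \<Rightarrow> 'x) \<Rightarrow> ('y \<Rightarrow> 'y) \<Rightarrow> ('z::ab_group_add \<Rightarrow> 'z) \<Rightarrow> ('x \<Rightarrow> 'y \<Rightarrow> 'z poly) \<Rightarrow> bool" where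
  "sesq Dx Dy Dz br \<longleftrightarrow>
     (\<forall>a b. br (Dx a) b = - pCons 0 (br a b)) \<and>
     (\<forall>a b. br a (Dy b) = map_poly Dz (br a b) + pCons 0 (br a b))"

text \<open>substitution \<open>\<lambda> \<mapsto> -\<partial>-\<lambda>\<close> in an element of \<open>M[\<lambda>]\<close> (Horner scheme; \<open>\<partial>\<close> acts on coefficients)\<close>
definition subst_nd :: "('z::ab_group_add \<Rightarrow> 'z) \<Rightarrow> 'z poly \<Rightarrow> 'z poly" where
  "subst_nd D p = fold_coeffs (\<lambda>c acc. [:c:] - (map_poly D acc + pCons 0 acc)) p 0"

text \<open>substitution \<open>\<nu> \<mapsto> \<lambda>+\<mu>\<close>: from \<open>M[\<nu>]\<close> to \<open>M[\<lambda>,\<mu>]\<close>\<close>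
definition subst_sum :: "'z::ab_group_add poly \<Rightarrow> 'z poly poly" where
  "subst_sum r = fold_coeffs (\<lambda>z acc. [:[:z:]:] + map_poly (pCons 0) acc + pCons 0 acc) r 0"

text \<open>change of representation: outer variable \<open>\<lambda>\<close>/inner \<open>\<mu>\<close> to outer \<open>\<mu>\<close>/inner \<open>\<lambda>\<close>\<close>
definition swap_var :: "'z::ab_group_add poly poly \<Rightarrow> 'z poly poly" where
  "swap_var P = fold_coeffs (\<lambda>Q acc. map_poly (\<lambda>x. [:x:]) Q + map_poly (pCons 0) acc) P 0"

text \<open>Jacobi-type identity
  \<open>[a\<^sub>\<lambda>[b\<^sub>\<mu> c]] = [[a\<^sub>\<lambda> b]\<^sub>\<lambda>\<^sub>+\<^sub>\<mu> c] + [b\<^sub>\<mu>[a\<^sub>\<lambda> c]]\<close>, where \<open>brB\<close> is the bracket on \<open>X\<close>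
  and \<open>brA : X \<otimes> Y \<rightarrow> Y[\<lambda>]\<close>; all three terms live in \<open>Y[\<lambda>,\<mu>]\<close>.\<close>
definition jacobi :: "('x \<Rightarrow> 'y::ab_group_add \<Rightarrow> 'y poly) \<Rightarrow> ('x \<Rightarrow> 'x::zero \<Rightarrow> 'x poly) \<Rightarrow> bool" where
  "jacobi brA brB \<longleftrightarrow>
     (\<forall>a b c. map_poly (brA a) (brA b c) =
        fold_coeffs (\<lambda>y acc. subst_sum (brA y c) + map_poly (pCons 0) acc) (brB a b) 0
        + swap_var (map_poly (brA b) (brA a c)))"

definition lie_conformal :: "(complex \<Rightarrow> 'a::ab_group_add \<Rightarrow> 'a) \<Rightarrow> ('a \<Rightarrow> 'a) \<Rightarrow> ('a \<Rightarrow> 'a \<Rightarrow> 'a poly) \<Rightarrow> bool" where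
  "lie_conformal sc D br \<longleftrightarrow>
     bilin sc sc sc br \<and> sesq D D D br \<and>
     (\<forall>a b. br a b = - subst_nd D (br b a)) \<and> jacobi br br"

definition nij_cond :: "('x \<Rightarrow> 'x) \<Rightarrow> ('y::ab_group_add \<Rightarrow> 'y) \<Rightarrow> ('x \<Rightarrow> 'y \<Rightarrow> 'y poly) \<Rightarrow> bool" where
  "nij_cond NA NB br \<longleftrightarrow>
     (\<forall>p m. br (NA p) (NB m) = map_poly NB (br (NA p) m + br p (NB m) - map_poly NB (br p m)))"

definition nijenhuis_lca ::
  "(complex \<Rightarrow> 'a::ab_group_add \<Rightarrow> 'a) \<Rightarrow> ('a \<Rightarrow> 'a) \<Rightarrow> ('a \<Rightarrow> 'a \<Rightarrow> 'a poly) \<Rightarrow> ('a \<Rightarrow> 'a) \<Rightarrow> bool" where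
  "nijenhuis_lca sc D br N \<longleftrightarrow> lie_conformal sc D br \<and> cd_linear sc sc D D N \<and> nij_cond N N br"

definition conf_rep ::
  "(complex \<Rightarrow> 'a::ab_group_add \<Rightarrow> 'a) \<Rightarrow> ('a \<Rightarrow> 'a) \<Rightarrow> ('a \<Rightarrow> 'a \<Rightarrow> 'a poly)
   \<Rightarrow> (complex \<Rightarrow> 'b::ab_group_add \<Rightarrow> 'b) \<Rightarrow> ('b \<Rightarrow> 'b) \<Rightarrow> ('a \<Rightarrow> 'b \<Rightarrow> 'b poly) \<Rightarrow> bool" where
  "conf_rep sc0 D0 br sc1 D1 rho \<longleftrightarrow> bilin sc0 sc1 sc1 rho \<and> sesq D0 D1 D1 rho \<and> jacobi rho br"

definition nij_rep ::
  "(complex \<Rightarrow> 'a::ab_group_add \<Rightarrow> 'a) \<Rightarrow> ('a \<Rightarrow> 'a) \<Rightarrow> ('a \<Rightarrow> 'a \<Rightarrow> 'a poly) \<Rightarrow> ('a \<Rightarrow> 'a)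
   \<Rightarrow> (complex \<Rightarrow> 'b::ab_group_add \<Rightarrow> 'b) \<Rightarrow> ('b \<Rightarrow> 'b) \<Rightarrow> ('a \<Rightarrow> 'b \<Rightarrow> 'b poly) \<Rightarrow> ('b \<Rightarrow> 'b) \<Rightarrow> bool" where
  "nij_rep sc0 D0 br N0 sc1 D1 rho N1 \<longleftrightarrow>
     conf_rep sc0 D0 br sc1 D1 rho \<and> cd_linear sc1 sc1 D1 D1 N1 \<and> nij_cond N0 N1 rho"

definition nlca_morphism ::
  "(complex \<Rightarrow> 'b::ab_group_add \<Rightarrow> 'b) \<Rightarrow> ('b \<Rightarrow> 'b) \<Rightarrow> ('b \<Rightarrow> 'b \<Rightarrow> 'b poly) \<Rightarrow> ('b \<Rightarrow> 'b)
   \<Rightarrow> (complex \<Rightarrow> 'a::ab_group_add \<Rightarrow> 'a) \<Rightarrow> ('a \<Rightarrow> 'a) \<Rightarrow> ('a \<Rightarrow> 'a \<Rightarrow> 'a poly) \<Rightarrow> ('a \<Rightarrow> 'a)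
   \<Rightarrow> ('b \<Rightarrow> 'a) \<Rightarrow> bool" where
  "nlca_morphism sc1 D1 br1 N1 sc0 D0 br0 N0 t \<longleftrightarrow>
     cd_linear sc1 sc0 D1 D0 t \<and>
     (\<forall>m n. br0 (t m) (t n) = map_poly t (br1 m n)) \<and>
     (\<forall>m. t (N1 m) = N0 (t m))"

type_synonym ('a,'b) xmod_data =
  "('a \<Rightarrow> 'a \<Rightarrow> 'a poly) \<times> ('a \<Rightarrow> 'a) \<times> ('b \<Rightarrow> 'b \<Rightarrow> 'b poly) \<times> ('b \<Rightarrow> 'b) \<times> ('b \<Rightarrow> 'a) \<times> ('a \<Rightarrow> 'b \<Rightarrow> 'b poly)"

definition crossed_module ::
  "(complex \<Rightarrow> 'a::ab_group_add \<Rightarrow> 'a) \<Rightarrow> ('a \<Rightarrow> 'a) \<Rightarrow> (complex \<Rightarrow> 'b::ab_group_add \<Rightarrow> 'b) \<Rightarrow> ('b \<Rightarrow> 'b)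
   \<Rightarrow> ('a,'b) xmod_data \<Rightarrow> bool" where
  "crossed_module sc0 D0 sc1 D1 X \<longleftrightarrow> (case X of (br0, N0, br1, N1, t, rho) \<Rightarrow>
     nijenhuis_lca sc0 D0 br0 N0 \<and> nijenhuis_lca sc1 D1 br1 N1 \<and>
     nlca_morphism sc1 D1 br1 N1 sc0 D0 br0 N0 t \<and>
     nij_rep sc0 D0 br0 N0 sc1 D1 rho N1 \<and>
     (\<forall>p m. map_poly t (rho p m) = br0 p (t m)) \<and>
     (\<forall>m n. rho (t m) n = br1 m n))"

type_synonym ('a,'b) strict_data =
  "('b \<Rightarrow> 'a) \<times> ('a \<Rightarrow> 'a \<Rightarrow> 'a poly) \<times> ('a \<Rightarrow> 'b \<Rightarrow> 'b poly) \<times> ('b \<Rightarrow> 'a \<Rightarrow> 'b poly) \<times> ('a \<Rightarrow> 'a) \<times> ('b \<Rightarrow> 'b)"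

text \<open>strict 2-term Nijenhuis \<open>L\<^sub>\<infinity>\<close>-conformal algebra data \<open>(d, l00, l01, l10, N0, N1)\<close>
  on fixed underlying \<open>\<complex>[\<partial>]\<close>-modules \<open>L0, L1\<close> (the bracket on \<open>L1 \<otimes> L1\<close> is zero)\<close>
definition strict_2term ::
  "(complex \<Rightarrow> 'a::ab_group_add \<Rightarrow> 'a) \<Rightarrow> ('a \<Rightarrow> 'a) \<Rightarrow> (complex \<Rightarrow> 'b::ab_group_add \<Rightarrow> 'b) \<Rightarrow> ('b \<Rightarrow> 'b)
   \<Rightarrow> ('a,'b) strict_data \<Rightarrow> bool" where
  "strict_2term sc0 D0 sc1 D1 S \<longleftrightarrow> (case S of (d, l00, l01, l10, N0, N1) \<Rightarrow>
     cd_linear sc1 sc0 D1 D0 d \<and>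
     bilin sc0 sc0 sc0 l00 \<and> sesq D0 D0 D0 l00 \<and>
     bilin sc0 sc1 sc1 l01 \<and> sesq D0 D1 D1 l01 \<and>
     bilin sc1 sc0 sc1 l10 \<and> sesq D1 D0 D1 l10 \<and>
     cd_linear sc0 sc0 D0 D0 N0 \<and> cd_linear sc1 sc1 D1 D1 N1 \<and>
     (\<forall>p m. l01 p m = - subst_nd D1 (l10 m p)) \<and>
     (\<forall>p q. l00 p q = - subst_nd D0 (l00 q p)) \<and>
     (\<forall>p m. map_poly d (l01 p m) = l00 p (d m)) \<and>
     (\<forall>m n. l01 (d m) n = l10 m (d n)) \<and>
     jacobi l00 l00 \<and>
     jacobi l01 l00 \<and>
     (\<forall>m. d (N1 m) = N0 (d m)) \<and>
     nij_cond N0 N0 l00 \<and>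
     nij_cond N0 N1 l01)"

definition strict_to_xmod :: "('a,'b) strict_data \<Rightarrow> ('a,'b) xmod_data" where
  "strict_to_xmod S = (case S of (d, l00, l01, l10, N0, N1) \<Rightarrow>
     (l00, N0, (\<lambda>m n. l01 (d m) n), N1, d, l01))"

end

theory Submission
  imports Defs
begin

definition addf :: "('a::ab_group_add \<Rightarrow> 'b::ab_group_add) \<Rightarrow> bool" where
  "addf f \<longleftrightarrow> (\<forall>x y. f (x + y) = f x + f y)"

lemma addf_0: "addf f \<Longrightarrow> f 0 = 0"
  unfolding addf_def by (metis add_cancel_right_right add_0)

lemma addf_minus: "addf f \<Longrightarrow> f (- x) = - f x"
  using addf_0[of f] unfolding addf_def
  by (metis add.right_inverse eq_neg_iff_add_eq_0)

lemma addf_diff: "addf f \<Longrightarrow> f (x - y) = f x - f y"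
  using addf_minus[of f y] unfolding addf_def by (metis diff_conv_add_uminus)

lemma map_poly_add_addf: "addf f \<Longrightarrow> map_poly f (p + q) = map_poly f p + map_poly f q"
  by (intro poly_eqI) (simp add: coeff_map_poly addf_0 addf_def)

lemma map_poly_minus_addf: "addf f \<Longrightarrow> map_poly f (- p) = - map_poly f p"
  by (intro poly_eqI) (simp add: coeff_map_poly addf_0 addf_minus)

lemma map_poly_diff_addf: "addf f \<Longrightarrow> map_poly f (p - q) = map_poly f p - map_poly f q"
  by (intro poly_eqI) (simp add: coeff_map_poly addf_0 addf_diff)

lemma fold_coeffs_pCons_gen:
  assumes "F 0 z = z"
  shows "fold_coeffs F (pCons a p) z = F a (fold_coeffs F p z)"
proof (cases "a = 0 \<and> p = 0")
  case True then show ?thesis using assms by simp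
next
  case False then show ?thesis by auto
qed

lemma subst_nd_pCons:
  "subst_nd D (pCons c p) = [:c:] - (map_poly D (subst_nd D p) + pCons 0 (subst_nd D p))"
  unfolding subst_nd_def by (rule fold_coeffs_pCons_gen) simp

lemma subst_nd_0 [simp]: "subst_nd D 0 = 0"
  unfolding subst_nd_def by simp

lemma subst_nd_const: "subst_nd D [:c:] = [:c:]"
  using subst_nd_pCons[of D c 0] by simp

lemma subst_nd_add:
  assumes "addf D"
  shows "subst_nd D (p + q) = subst_nd D p + subst_nd D q"
proof (induction p arbitrary: q)
  case 0 then show ?case by simp
next
  case (pCons a p)
  obtain b q' where q: "q = pCons b q'" by (cases q)
  have "subst_nd D (pCons a p + q) = subst_nd D (pCons (a + b) (p + q'))" by (simp add: q)
  also have "\<dots> = [:a+b:] - (map_poly D (subst_nd D p + subst_nd D q') + pCons 0 (subst_nd D p + subst_nd D q'))"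
    by (simp add: subst_nd_pCons pCons.IH)
  also have "\<dots> = subst_nd D (pCons a p) + subst_nd D q"
    by (simp add: q subst_nd_pCons map_poly_add_addf[OF assms] algebra_simps)
  finally show ?case .
qed

lemma subst_nd_minus:
  assumes "addf D" shows "subst_nd D (- p) = - subst_nd D p"
  using subst_nd_add[OF assms, of "-p" p] by (simp add: eq_neg_iff_add_eq_0)

lemma subst_nd_diff:
  assumes "addf D" shows "subst_nd D (p - q) = subst_nd D p - subst_nd D q"
  using subst_nd_add[OF assms, of p "-q"] subst_nd_minus[OF assms, of q] by simp

lemma subst_nd_map:
  assumes D: "addf D" and f: "addf f" and comm: "\<And>x. f (D x) = D (f x)"
  shows "subst_nd D (map_poly f p) = map_poly f (subst_nd D p)"
proof (induction p)
  case 0 then show ?case by simp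
next
  case (pCons a p)
  have mm: "map_poly D (map_poly f q) = map_poly f (map_poly D q)" for q
    by (intro poly_eqI) (simp add: coeff_map_poly addf_0[OF D] addf_0[OF f] comm)
  show ?case
    by (simp add: map_poly_pCons addf_0[OF f] subst_nd_pCons pCons.IH map_poly_diff_addf[OF f]
        map_poly_add_addf[OF f] mm)
qed

lemma subst_nd_invol:
  assumes D: "addf D"
  shows "subst_nd D (subst_nd D p) = p"
proof (induction p)
  case 0 then show ?case by simp
next
  case (pCons a p)
  have DD: "subst_nd D (map_poly D q) = map_poly D (subst_nd D q)" for q
    by (rule subst_nd_map[OF D D]) simp
  have "subst_nd D (subst_nd D (pCons a p)) =
     [:a:] - (map_poly D (subst_nd D (subst_nd D p)) + subst_nd D (pCons 0 (subst_nd D p)))"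
    by (simp add: subst_nd_pCons subst_nd_diff[OF D] subst_nd_add[OF D] subst_nd_const DD)
  also have "\<dots> = pCons a p"
    by (simp add: pCons.IH subst_nd_pCons)
  finally show ?case .
qed


lemma bilin_zero: "bilin sx sy sz br \<Longrightarrow> br 0 b = 0"
  unfolding bilin_def by (metis add_0 add_cancel_right_right)

lemma fold_map_poly:
  assumes "F 0 0 = 0" "d 0 = 0"
  shows "fold_coeffs F (map_poly d p) 0 = fold_coeffs (\<lambda>y. F (d y)) p 0"
proof (induction p)
  case 0 then show ?case by simp
next
  case (pCons a p)
  show ?case
    by (simp add: map_poly_pCons assms fold_coeffs_pCons_gen pCons.IH)
qed

lemma linear_addf: "Vector_Spaces.linear s1 s2 f \<Longrightarrow> addf f"
  unfolding addf_def by (simp add: Vector_Spaces.linear_iff)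

lemma linear_scaleD: "Vector_Spaces.linear s1 s2 f \<Longrightarrow> f (s1 c x) = s2 c (f x)"
  by (simp add: Vector_Spaces.linear_iff)

lemma cmodule_addf: "cmodule sc D \<Longrightarrow> addf D"
  unfolding cmodule_def by (auto intro: linear_addf)

lemma cmodule_sc_addf: "cmodule sc D \<Longrightarrow> addf (sc c)"
  unfolding cmodule_def addf_def by (simp add: vector_space.vector_space_assms(1))

lemma cmodule_sc_comm: "cmodule sc D \<Longrightarrow> sc c (D x) = D (sc c x)"
  unfolding cmodule_def by (metis linear_scaleD)


lemma strict_to_xmod_in:
  assumes c0: "cmodule sc0 D0" and c1: "cmodule sc1 D1"
    and S: "strict_2term sc0 D0 sc1 D1 (d, l00, l01, l10, N0, N1)"
  shows "crossed_module sc0 D0 sc1 D1 (strict_to_xmod (d, l00, l01, l10, N0, N1))"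
proof -
  from S have dlin: "cd_linear sc1 sc0 D1 D0 d"
    and b00: "bilin sc0 sc0 sc0 l00" and s00: "sesq D0 D0 D0 l00"
    and b01: "bilin sc0 sc1 sc1 l01" and s01: "sesq D0 D1 D1 l01"
    and N0l: "cd_linear sc0 sc0 D0 D0 N0" and N1l: "cd_linear sc1 sc1 D1 D1 N1"
    and anti01: "\<forall>p m. l01 p m = - subst_nd D1 (l10 m p)"
    and anti00: "\<forall>p q. l00 p q = - subst_nd D0 (l00 q p)"
    and eqv: "\<forall>p m. map_poly d (l01 p m) = l00 p (d m)"
    and pf: "\<forall>m n. l01 (d m) n = l10 m (d n)"
    and j00: "jacobi l00 l00" and j01: "jacobi l01 l00"
    and dN: "\<forall>m. d (N1 m) = N0 (d m)"
    and n00: "nij_cond N0 N0 l00" and n01: "nij_cond N0 N1 l01"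
    using S unfolding strict_2term_def prod.case by blast+
  have aD1: "addf D1" by (rule cmodule_addf[OF c1])
  have dl: "Vector_Spaces.linear sc1 sc0 d" and dD: "\<And>x. d (D1 x) = D0 (d x)"
    using dlin unfolding cd_linear_def by auto
  have dadd: "\<And>x y. d (x + y) = d x + d y" and dsc: "\<And>c x. d (sc1 c x) = sc0 c (d x)"
    using dl by (auto simp: Vector_Spaces.linear_iff)
  have d0: "d 0 = 0" using linear_addf[OF dl] by (rule addf_0)
  have l10anti: "l10 m p = - subst_nd D1 (l01 p m)" for m p
    using anti01 subst_nd_invol[OF aD1] subst_nd_minus[OF aD1] by simp
  define br1 where "br1 = (\<lambda>m n. l01 (d m) n)"
  have lc1: "lie_conformal sc1 D1 br1"
    unfolding lie_conformal_def
  proof (intro conjI)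
    show "bilin sc1 sc1 sc1 br1"
      using b01 unfolding bilin_def br1_def by (simp add: dadd dsc)
    show "sesq D1 D1 D1 br1"
      using s01 unfolding sesq_def br1_def by (simp add: dD)
    show "\<forall>a b. br1 a b = - subst_nd D1 (br1 b a)"
      unfolding br1_def using pf l10anti by metis
    show "jacobi br1 br1"
      unfolding jacobi_def
    proof (intro allI)
      fix a b c
      have F0: "subst_sum (l01 0 c) + map_poly (pCons 0) 0 = 0"
        using bilin_zero[OF b01] by (simp add: subst_sum_def)
      have "fold_coeffs (\<lambda>y acc. subst_sum (l01 y c) + map_poly (pCons 0) acc) (l00 (d a) (d b)) 0
          = fold_coeffs (\<lambda>y acc. subst_sum (br1 y c) + map_poly (pCons 0) acc) (br1 a b) 0"
        unfolding br1_def eqv[rule_format, symmetric]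
        by (rule fold_map_poly[where F="\<lambda>y acc. subst_sum (l01 y c) + map_poly (pCons 0) acc" and d=d, OF F0 d0])
      then show "map_poly (br1 a) (br1 b c) =
        fold_coeffs (\<lambda>y acc. subst_sum (br1 y c) + map_poly (pCons 0) acc) (br1 a b) 0
        + swap_var (map_poly (br1 b) (br1 a c))"
        using j01 unfolding jacobi_def br1_def by metis
    qed
  qed
  have nij1: "nij_cond N1 N1 br1"
    using n01 dN unfolding nij_cond_def br1_def by simp
  show ?thesis
    unfolding strict_to_xmod_def crossed_module_def
    apply (simp only: prod.case br1_def[symmetric])
    apply (intro conjI)
    subgoal using lie_conformal_def b00 s00 anti00 j00 N0l n00 nijenhuis_lca_def by blast
    subgoal using lc1 N1l nij1 nijenhuis_lca_def by blast
    subgoal unfolding nlca_morphism_def br1_def using dlin eqv dN by simp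
    subgoal unfolding nij_rep_def conf_rep_def using b01 s01 j01 N1l n01 by blast
    subgoal using eqv by blast
    subgoal unfolding br1_def by simp
    done
qed


lemma xmod_to_strict:
  assumes c0: "cmodule sc0 D0" and c1: "cmodule sc1 D1"
    and X: "crossed_module sc0 D0 sc1 D1 (br0, N0, br1, N1, t, rho)"
  shows "strict_2term sc0 D0 sc1 D1 (t, br0, rho, (\<lambda>m p. - subst_nd D1 (rho p m)), N0, N1)
     \<and> strict_to_xmod (t, br0, rho, (\<lambda>m p. - subst_nd D1 (rho p m)), N0, N1) = (br0, N0, br1, N1, t, rho)"
proof -
  from X have n0: "nijenhuis_lca sc0 D0 br0 N0" and n1: "nijenhuis_lca sc1 D1 br1 N1"
    and mor: "nlca_morphism sc1 D1 br1 N1 sc0 D0 br0 N0 t"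
    and nr: "nij_rep sc0 D0 br0 N0 sc1 D1 rho N1"
    and eqv: "\<forall>p m. map_poly t (rho p m) = br0 p (t m)"
    and pf: "\<forall>m n. rho (t m) n = br1 m n"
    unfolding crossed_module_def prod.case by blast+
  from n0 have b00: "bilin sc0 sc0 sc0 br0" and s00: "sesq D0 D0 D0 br0"
    and anti00: "\<forall>p q. br0 p q = - subst_nd D0 (br0 q p)" and j00: "jacobi br0 br0"
    and N0l: "cd_linear sc0 sc0 D0 D0 N0" and nn0: "nij_cond N0 N0 br0"
    unfolding nijenhuis_lca_def lie_conformal_def by blast+
  from n1 have anti11: "\<forall>p q. br1 p q = - subst_nd D1 (br1 q p)"
    unfolding nijenhuis_lca_def lie_conformal_def by blast
  from mor have tl: "cd_linear sc1 sc0 D1 D0 t" and tN: "\<forall>m. t (N1 m) = N0 (t m)"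
    unfolding nlca_morphism_def by blast+
  from nr have b01: "bilin sc0 sc1 sc1 rho" and s01: "sesq D0 D1 D1 rho"
    and j01: "jacobi rho br0" and N1l: "cd_linear sc1 sc1 D1 D1 N1" and nn1: "nij_cond N0 N1 rho"
    unfolding nij_rep_def conf_rep_def by blast+
  have aD1: "addf D1" by (rule cmodule_addf[OF c1])
  have DD: "subst_nd D1 (map_poly D1 q) = map_poly D1 (subst_nd D1 q)" for q
    by (rule subst_nd_map[OF aD1 aD1]) simp
  have SC: "subst_nd D1 (map_poly (sc1 c) q) = map_poly (sc1 c) (subst_nd D1 q)" for c q
    by (rule subst_nd_map[OF aD1 cmodule_sc_addf[OF c1]]) (rule cmodule_sc_comm[OF c1])
  have SP: "subst_nd D1 (pCons 0 q) = - (map_poly D1 (subst_nd D1 q) + pCons 0 (subst_nd D1 q))" for q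
    using subst_nd_pCons[of D1 0 q] by simp
  define l10 where "l10 = (\<lambda>m p. - subst_nd D1 (rho p m))"
  have bl10: "bilin sc1 sc0 sc1 l10"
    using b01 unfolding bilin_def l10_def
    by (simp add: subst_nd_add[OF aD1] SC map_poly_minus_addf[OF cmodule_sc_addf[OF c1]])
  have sl10: "sesq D1 D0 D1 l10"
    using s01 unfolding sesq_def l10_def
    by (simp add: subst_nd_add[OF aD1] subst_nd_minus[OF aD1] DD SP map_poly_minus_addf[OF aD1]
        map_poly_add_addf[OF aD1])
  have a01: "\<forall>p m. rho p m = - subst_nd D1 (l10 m p)"
    unfolding l10_def by (simp add: subst_nd_minus[OF aD1] subst_nd_invol[OF aD1])
  have pf2: "\<forall>m n. rho (t m) n = l10 m (t n)"
    unfolding l10_def using pf anti11 by metis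
  have "strict_2term sc0 D0 sc1 D1 (t, br0, rho, l10, N0, N1)"
    unfolding strict_2term_def prod.case
    using tl b00 s00 b01 s01 bl10 sl10 N0l N1l a01 anti00 eqv pf2 j00 j01 tN nn0 nn1
    by blast
  moreover have "strict_to_xmod (t, br0, rho, l10, N0, N1) = (br0, N0, br1, N1, t, rho)"
    unfolding strict_to_xmod_def using pf by (simp add: fun_eq_iff)
  ultimately show ?thesis unfolding l10_def by simp
qed


lemma strict_l10:
  assumes c1: "cmodule sc1 D1" and S: "strict_2term sc0 D0 sc1 D1 (d, l00, l01, l10, N0, N1)"
  shows "l10 = (\<lambda>m p. - subst_nd D1 (l01 p m))"
proof -
  have aD1: "addf D1" by (rule cmodule_addf[OF c1])
  from S have "\<forall>p m. l01 p m = - subst_nd D1 (l10 m p)"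
    unfolding strict_2term_def prod.case by blast
  then show ?thesis
    by (simp add: fun_eq_iff subst_nd_minus[OF aD1] subst_nd_invol[OF aD1])
qed

theorem theorem4p10:
  fixes sc0 :: "complex \<Rightarrow> 'a::ab_group_add \<Rightarrow> 'a" and D0 :: "'a \<Rightarrow> 'a"
    and sc1 :: "complex \<Rightarrow> 'b::ab_group_add \<Rightarrow> 'b" and D1 :: "'b \<Rightarrow> 'b"
  assumes "cmodule sc0 D0" and "cmodule sc1 D1"
  shows "bij_betw strict_to_xmod
           {S. strict_2term sc0 D0 sc1 D1 S}
           {X. crossed_module sc0 D0 sc1 D1 X}"
  unfolding bij_betw_def
proof (intro conjI)
  show "inj_on strict_to_xmod {S. strict_2term sc0 D0 sc1 D1 S}"
  proof (rule inj_onI)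
    fix S S' assume S: "S \<in> {S. strict_2term sc0 D0 sc1 D1 S}" and S': "S' \<in> {S. strict_2term sc0 D0 sc1 D1 S}"
      and eq: "strict_to_xmod S = strict_to_xmod S'"
    obtain d l00 l01 l10 N0 N1 where s: "S = (d, l00, l01, l10, N0, N1)" by (cases S) auto
    obtain d' l00' l01' l10' N0' N1' where s': "S' = (d', l00', l01', l10', N0', N1')" by (cases S') auto
    from eq have e: "d = d'" "l00 = l00'" "l01 = l01'" "N0 = N0'" "N1 = N1'"
      unfolding s s' strict_to_xmod_def by auto
    have "l10 = l10'"
      using strict_l10[OF assms(2), of sc0 D0 d l00 l01 l10 N0 N1]
        strict_l10[OF assms(2), of sc0 D0 d' l00' l01' l10' N0' N1'] S S' e
      unfolding s s' by simp
    then show "S = S'" using s s' e by simp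
  qed
  show "strict_to_xmod ` {S. strict_2term sc0 D0 sc1 D1 S} = {X. crossed_module sc0 D0 sc1 D1 X}"
  proof
    show "strict_to_xmod ` {S. strict_2term sc0 D0 sc1 D1 S} \<subseteq> {X. crossed_module sc0 D0 sc1 D1 X}"
    proof
      fix X assume "X \<in> strict_to_xmod ` {S. strict_2term sc0 D0 sc1 D1 S}"
      then obtain S where S: "strict_2term sc0 D0 sc1 D1 S" and X: "X = strict_to_xmod S" by auto
      obtain d l00 l01 l10 N0 N1 where s: "S = (d, l00, l01, l10, N0, N1)" by (cases S) auto
      show "X \<in> {X. crossed_module sc0 D0 sc1 D1 X}"
        using strict_to_xmod_in[OF assms, of d l00 l01 l10 N0 N1] S X s by simp
    qed
    show "{X. crossed_module sc0 D0 sc1 D1 X} \<subseteq> strict_to_xmod ` {S. strict_2term sc0 D0 sc1 D1 S}"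
    proof
      fix X assume X: "X \<in> {X. crossed_module sc0 D0 sc1 D1 X}"
      obtain br0 N0 br1 N1 t rho where x: "X = (br0, N0, br1, N1, t, rho)" by (cases X) auto
      from xmod_to_strict[OF assms, of br0 N0 br1 N1 t rho] X x
      show "X \<in> strict_to_xmod ` {S. strict_2term sc0 D0 sc1 D1 S}"
        by (metis (mono_tags, lifting) image_eqI mem_Collect_eq)
    qed
  qed
qed

end
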